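(* Let $n\geqslant1$ and let $G_1,\dots,G_n$ be groups. For each $1\leqslant i\leqslant n$ let $A_i\subseteq G_i$ be a subset with a minimal complement $M_i$ in $G_i$. Then $\prod_{i=1}^nM_i$ is a minimal complement of $\prod_{i=1}^nA_i$ in $\prod_{i=1}^nG_i$.
   Context: A nonempty $W'\subseteq G$ is a complement to $W\subseteq G$ if $WW'=\{ww':w\in W,w'\in W'\}=G$; it is a minimal complement if no proper subset of $W'$ is a complement to $W$. Products of groups carry the componentwise operation. *)

theory Defs
  imports "HOL-Algebra.Algebra"
begin

definition complement :: "('a, 'm) monoid_scheme \<Rightarrow> 'a set \<Rightarrow> 'a set \<Rightarrow> bool" where
  "complement G W W' \<longleftrightarrow> W' \<noteq> {} \<and> W' \<subseteq> carrier G \<and> W <#>\<^bsub>G\<^esub> W' = carrier G"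

definition minimal_complement :: "('a, 'm) monoid_scheme \<Rightarrow> 'a set \<Rightarrow> 'a set \<Rightarrow> bool" where
  "minimal_complement G W W' \<longleftrightarrow> complement G W W' \<and> (\<forall>W''. W'' \<subset> W' \<longrightarrow> \<not> complement G W W'')"

end

theory Submission
  imports Defs
begin

lemma prod_complement:
  fixes I :: "'i set" and G :: "'i \<Rightarrow> ('a, 'm) monoid_scheme"
  assumes "\<And>i. i \<in> I \<Longrightarrow> complement (G i) (A i) (M i)"
  shows "complement (product_group I G) (\<Pi>\<^sub>E i\<in>I. A i) (\<Pi>\<^sub>E i\<in>I. M i)"
proof -
  have ne: "\<And>i. i \<in> I \<Longrightarrow> M i \<noteq> {}" and sub: "\<And>i. i \<in> I \<Longrightarrow> M i \<subseteq> carrier (G i)"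
    and eq: "\<And>i. i \<in> I \<Longrightarrow> A i <#>\<^bsub>G i\<^esub> M i = carrier (G i)"
    using assms by (auto simp: complement_def)
  have "(\<Pi>\<^sub>E i\<in>I. M i) \<noteq> {}" using ne by (simp add: PiE_eq_empty_iff)
  moreover have "(\<Pi>\<^sub>E i\<in>I. M i) \<subseteq> carrier (product_group I G)"
    using sub by (auto simp: PiE_def Pi_def)
  moreover have "(\<Pi>\<^sub>E i\<in>I. A i) <#>\<^bsub>product_group I G\<^esub> (\<Pi>\<^sub>E i\<in>I. M i) = carrier (product_group I G)"
  proof
    show "(\<Pi>\<^sub>E i\<in>I. A i) <#>\<^bsub>product_group I G\<^esub> (\<Pi>\<^sub>E i\<in>I. M i) \<subseteq> carrier (product_group I G)"
    proof
      fix x assume "x \<in> (\<Pi>\<^sub>E i\<in>I. A i) <#>\<^bsub>product_group I G\<^esub> (\<Pi>\<^sub>E i\<in>I. M i)"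
      then obtain a m where a: "a \<in> (\<Pi>\<^sub>E i\<in>I. A i)" and m: "m \<in> (\<Pi>\<^sub>E i\<in>I. M i)"
        and x: "x = (\<lambda>i\<in>I. a i \<otimes>\<^bsub>G i\<^esub> m i)"
        by (auto simp: set_mult_def)
      have "\<And>i. i \<in> I \<Longrightarrow> a i \<otimes>\<^bsub>G i\<^esub> m i \<in> carrier (G i)"
      proof -
        fix i assume i: "i \<in> I"
        have "a i \<otimes>\<^bsub>G i\<^esub> m i \<in> A i <#>\<^bsub>G i\<^esub> M i"
          using a m i by (auto simp: set_mult_def)
        then show "a i \<otimes>\<^bsub>G i\<^esub> m i \<in> carrier (G i)" using eq i by simp
      qed
      then show "x \<in> carrier (product_group I G)" using x by auto
    qed
  next
    show "carrier (product_group I G) \<subseteq> (\<Pi>\<^sub>E i\<in>I. A i) <#>\<^bsub>product_group I G\<^esub> (\<Pi>\<^sub>E i\<in>I. M i)"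
    proof
      fix g assume g: "g \<in> carrier (product_group I G)"
      have "\<forall>i\<in>I. \<exists>p. fst p \<in> A i \<and> snd p \<in> M i \<and> g i = fst p \<otimes>\<^bsub>G i\<^esub> snd p"
      proof
        fix i assume i: "i \<in> I"
        then have "g i \<in> A i <#>\<^bsub>G i\<^esub> M i" using g eq by (auto simp: PiE_def Pi_def)
        then show "\<exists>p. fst p \<in> A i \<and> snd p \<in> M i \<and> g i = fst p \<otimes>\<^bsub>G i\<^esub> snd p"
          by (auto simp: set_mult_def)
      qed
      then obtain p where p: "\<And>i. i \<in> I \<Longrightarrow> fst (p i) \<in> A i \<and> snd (p i) \<in> M i \<and> g i = fst (p i) \<otimes>\<^bsub>G i\<^esub> snd (p i)"
        by metis
      define a where "a = (\<lambda>i\<in>I. fst (p i))"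
      define m where "m = (\<lambda>i\<in>I. snd (p i))"
      have "a \<in> (\<Pi>\<^sub>E i\<in>I. A i)" using p by (auto simp: a_def)
      moreover have "m \<in> (\<Pi>\<^sub>E i\<in>I. M i)" using p by (auto simp: m_def)
      moreover have "g = a \<otimes>\<^bsub>product_group I G\<^esub> m"
        using g p by (auto simp: a_def m_def PiE_def extensional_def)
      ultimately show "g \<in> (\<Pi>\<^sub>E i\<in>I. A i) <#>\<^bsub>product_group I G\<^esub> (\<Pi>\<^sub>E i\<in>I. M i)"
        by (auto simp: set_mult_def simp del: mult_product_group)
    qed
  qed
  ultimately show ?thesis by (simp add: complement_def)
qed

lemma prod_minimal:
  fixes I :: "'i set" and G :: "'i \<Rightarrow> ('a, 'm) monoid_scheme"
  assumes "\<And>i. i \<in> I \<Longrightarrow> minimal_complement (G i) (A i) (M i)"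
  shows "minimal_complement (product_group I G) (\<Pi>\<^sub>E i\<in>I. A i) (\<Pi>\<^sub>E i\<in>I. M i)"
proof -
  have c: "\<And>i. i \<in> I \<Longrightarrow> complement (G i) (A i) (M i)"
    using assms by (simp add: minimal_complement_def)
  have sub: "\<And>i. i \<in> I \<Longrightarrow> M i \<subseteq> carrier (G i)"
    using c by (auto simp: complement_def)
  have key: "\<And>i x. i \<in> I \<Longrightarrow> x \<in> M i \<Longrightarrow> \<exists>g\<in>carrier (G i). g \<notin> A i <#>\<^bsub>G i\<^esub> (M i - {x})"
  proof -
    fix i x assume i: "i \<in> I" and x: "x \<in> M i"
    have nc: "\<not> complement (G i) (A i) (M i - {x})"
    proof -
      have "M i - {x} \<subset> M i" using x by blast
      then show ?thesis using assms[OF i] unfolding minimal_complement_def by simp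
    qed
    show "\<exists>g\<in>carrier (G i). g \<notin> A i <#>\<^bsub>G i\<^esub> (M i - {x})"
    proof (cases "M i - {x} = {}")
      case True
      have "A i <#>\<^bsub>G i\<^esub> {} = {}" by (simp add: set_mult_def)
      then have "A i <#>\<^bsub>G i\<^esub> (M i - {x}) = {}" by (simp only: True)
      moreover have "carrier (G i) \<noteq> {}" using x sub[OF i] by auto
      ultimately show ?thesis by auto
    next
      case False
      then have "A i <#>\<^bsub>G i\<^esub> (M i - {x}) \<noteq> carrier (G i)"
        using nc sub[OF i] False unfolding complement_def by blast
      moreover have "A i <#>\<^bsub>G i\<^esub> (M i - {x}) \<subseteq> A i <#>\<^bsub>G i\<^esub> M i"
        by (auto simp: set_mult_def)
      moreover have "A i <#>\<^bsub>G i\<^esub> M i = carrier (G i)" using c[OF i] by (simp add: complement_def)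
      ultimately show ?thesis by blast
    qed
  qed
  have "\<not> complement (product_group I G) (\<Pi>\<^sub>E i\<in>I. A i) W" if W: "W \<subset> (\<Pi>\<^sub>E i\<in>I. M i)" for W
  proof
    assume cw: "complement (product_group I G) (\<Pi>\<^sub>E i\<in>I. A i) W"
    obtain m where m: "m \<in> (\<Pi>\<^sub>E i\<in>I. M i)" "m \<notin> W" using W by blast
    have "\<forall>i\<in>I. \<exists>g. g \<in> carrier (G i) \<and> g \<notin> A i <#>\<^bsub>G i\<^esub> (M i - {m i})"
    proof
      fix i assume i: "i \<in> I"
      have "m i \<in> M i" using m(1) i by (simp add: PiE_mem)
      then show "\<exists>g. g \<in> carrier (G i) \<and> g \<notin> A i <#>\<^bsub>G i\<^esub> (M i - {m i})" using key i by blast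
    qed
    then obtain h where h: "\<And>i. i \<in> I \<Longrightarrow> h i \<in> carrier (G i) \<and> h i \<notin> A i <#>\<^bsub>G i\<^esub> (M i - {m i})"
      by (metis bchoice)
    define g where "g = (\<lambda>i\<in>I. h i)"
    have "g \<in> carrier (product_group I G)" using h by (auto simp: g_def)
    then have "g \<in> (\<Pi>\<^sub>E i\<in>I. A i) <#>\<^bsub>product_group I G\<^esub> W"
      using cw by (simp add: complement_def)
    then obtain a w where a: "a \<in> (\<Pi>\<^sub>E i\<in>I. A i)" and w: "w \<in> W"
      and gw: "g = (\<lambda>i\<in>I. a i \<otimes>\<^bsub>G i\<^esub> w i)"
      by (auto simp: set_mult_def)
    have wM: "w \<in> (\<Pi>\<^sub>E i\<in>I. M i)" using w W by blast
    have "\<And>i. i \<in> I \<Longrightarrow> w i = m i"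
    proof (rule ccontr)
      fix i assume i: "i \<in> I" and ne: "w i \<noteq> m i"
      have "g i = h i" using i by (simp add: g_def)
      moreover have "g i = a i \<otimes>\<^bsub>G i\<^esub> w i" using gw i by simp
      ultimately have "h i = a i \<otimes>\<^bsub>G i\<^esub> w i" by simp
      moreover have "w i \<in> M i - {m i}" using wM i ne by auto
      moreover have "a i \<in> A i" using a i by auto
      ultimately have "h i \<in> A i <#>\<^bsub>G i\<^esub> (M i - {m i})" unfolding set_mult_def by blast
      then show False using h i by blast
    qed
    then have "w = m" using wM m(1) by (intro PiE_ext) auto
    then show False using w m(2) by simp
  qed
  then show ?thesis using prod_complement[OF c] by (simp add: minimal_complement_def)
qed

theorem proposition5p1:
  fixes n :: nat and G :: "nat \<Rightarrow> ('a, 'm) monoid_scheme"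
    and A M :: "nat \<Rightarrow> 'a set"
  assumes "n \<ge> 1"
    and "\<And>i. i \<in> {1..n} \<Longrightarrow> group (G i)"
    and "\<And>i. i \<in> {1..n} \<Longrightarrow> A i \<subseteq> carrier (G i)"
    and "\<And>i. i \<in> {1..n} \<Longrightarrow> minimal_complement (G i) (A i) (M i)"
  shows "minimal_complement (product_group {1..n} G)
           (\<Pi>\<^sub>E i\<in>{1..n}. A i) (\<Pi>\<^sub>E i\<in>{1..n}. M i)"
  by (rule prod_minimal[OF assms(4)])

end
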